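(* Let $G$ be a graph with $4\le |V(G)|\le 5$ and $E(G)\ne\emptyset$. Then $\varphi_r(G-v)=\varphi_r(G)+\lfloor |V(G)|/2\rfloor-2$ for every vertex $v\in V(G)$ if and only if $G$ contains two edges with no common endpoint but contains no induced subgraph that is a minimal b-$3$-atom.
   Context: A proper $k$-coloring of $G$ is a surjective map $c:V(G)\to\{1,\ldots,k\}$ with $c(u)\ne c(v)$ for every edge $uv$. In a proper $k$-coloring, a vertex of color $i$ is a b-vertex if it has a neighbor of every color $j\ne i$. A b-$k$-coloring is a proper $k$-coloring in which every color class contains a b-vertex; $\varphi(G)$ is the largest $k$ such that $G$ has a b-$k$-coloring, and $\varphi_r(G)=\max\{\varphi(H): H\text{ an induced subgraph of }G\}$. A b-$t$-atom is a graph $A$ whose vertex set can be partitioned into $t$ sets $D_1,\ldots,D_t$, each $D_i$ containing a special vertex $c_i$, such that each $D_i$ is independent with $|D_i|\le t$ and, for all $i\ne j$, $c_i$ has a neighbor in $D_j$; it is minimal if no proper induced subgraph of it is a b-$t$-atom. *)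

theory Defs
  imports Main
begin

text \<open>An induced subgraph on S \<subseteq> V
 is represented by the pair (S, E); all notions below only inspect E on
 pairs of vertices of the given vertex set.\<close>

definition graph :: "'a set \<Rightarrow> ('a \<Rightarrow> 'a \<Rightarrow> bool) \<Rightarrow> bool" where
  "graph V E \<longleftrightarrow> finite V \<and> (\<forall>u v. E u v \<longrightarrow> E v u) \<and> (\<forall>v. \<not> E v v)
     \<and> (\<forall>u v. E u v \<longrightarrow> u \<in> V \<and> v \<in> V)"

definition proper_coloring :: "'a set \<Rightarrow> ('a \<Rightarrow> 'a \<Rightarrow> bool) \<Rightarrow> ('a \<Rightarrow> nat) \<Rightarrow> nat \<Rightarrow> bool" where
  "proper_coloring V E c k \<longleftrightarrow> c ` V = {1..k}
     \<and> (\<forall>u\<in>V. \<forall>v\<in>V. E u v \<longrightarrow> c u \<noteq> c v)"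

definition b_vertex :: "'a set \<Rightarrow> ('a \<Rightarrow> 'a \<Rightarrow> bool) \<Rightarrow> ('a \<Rightarrow> nat) \<Rightarrow> nat \<Rightarrow> 'a \<Rightarrow> bool" where
  "b_vertex V E c k v \<longleftrightarrow> v \<in> V
     \<and> (\<forall>j\<in>{1..k}. j \<noteq> c v \<longrightarrow> (\<exists>u\<in>V. E v u \<and> c u = j))"

definition b_coloring :: "'a set \<Rightarrow> ('a \<Rightarrow> 'a \<Rightarrow> bool) \<Rightarrow> ('a \<Rightarrow> nat) \<Rightarrow> nat \<Rightarrow> bool" where
  "b_coloring V E c k \<longleftrightarrow> proper_coloring V E c k
     \<and> (\<forall>i\<in>{1..k}. \<exists>v\<in>V. c v = i \<and> b_vertex V E c k v)"

definition b_chromatic :: "'a set \<Rightarrow> ('a \<Rightarrow> 'a \<Rightarrow> bool) \<Rightarrow> nat" where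
  "b_chromatic V E = Max {k. \<exists>c. b_coloring V E c k}"

definition b_chromatic_r :: "'a set \<Rightarrow> ('a \<Rightarrow> 'a \<Rightarrow> bool) \<Rightarrow> nat" where
  "b_chromatic_r V E = Max {b_chromatic S E | S. S \<subseteq> V}"

definition independent :: "('a \<Rightarrow> 'a \<Rightarrow> bool) \<Rightarrow> 'a set \<Rightarrow> bool" where
  "independent E D \<longleftrightarrow> (\<forall>u\<in>D. \<forall>v\<in>D. \<not> E u v)"

definition b_atom :: "'a set \<Rightarrow> ('a \<Rightarrow> 'a \<Rightarrow> bool) \<Rightarrow> nat \<Rightarrow> bool" where
  "b_atom V E t \<longleftrightarrow> (\<exists>D :: nat \<Rightarrow> 'a set. \<exists>c :: nat \<Rightarrow> 'a.
      (\<Union>i\<in>{1..t}. D i) = V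
    \<and> (\<forall>i\<in>{1..t}. \<forall>j\<in>{1..t}. i \<noteq> j \<longrightarrow> D i \<inter> D j = {})
    \<and> (\<forall>i\<in>{1..t}. c i \<in> D i \<and> independent E (D i) \<and> card (D i) \<le> t)
    \<and> (\<forall>i\<in>{1..t}. \<forall>j\<in>{1..t}. i \<noteq> j \<longrightarrow> (\<exists>u\<in>D j. E (c i) u)))"

definition minimal_b_atom :: "'a set \<Rightarrow> ('a \<Rightarrow> 'a \<Rightarrow> bool) \<Rightarrow> nat \<Rightarrow> bool" where
  "minimal_b_atom V E t \<longleftrightarrow> b_atom V E t \<and> (\<forall>S. S \<subset> V \<longrightarrow> \<not> b_atom S E t)"

end

theory Submission
  imports Defs
begin

definition WW :: "'a set \<Rightarrow> ('a \<Rightarrow> 'a \<Rightarrow> bool) \<Rightarrow> nat \<Rightarrow> bool" where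
  "WW V E k \<longleftrightarrow> (\<exists>S\<subseteq>V. \<exists>c. b_coloring S E c k)"

lemma bcol_le_card:
  assumes "b_coloring S E c k" "finite S"
  shows "k \<le> card S"
proof -
  have "c ` S = {1..k}" using assms(1) by (simp add: b_coloring_def proper_coloring_def)
  then have "card {1..k} \<le> card S" by (metis card_image_le assms(2))
  then show ?thesis by simp
qed

lemma recolor:
  assumes sym: "\<forall>u v. E u v \<longrightarrow> E v u" and pc: "proper_coloring S E c k" and i: "i \<in> {1..k}"
    and nob: "\<forall>v\<in>S. c v = i \<longrightarrow> \<not> b_vertex S E c k v"
  shows "\<exists>c'. proper_coloring S E c' (k - 1)"
proof -
  have "\<forall>v\<in>S. \<exists>j. c v = i \<longrightarrow> (j \<in> {1..k} \<and> j \<noteq> i \<and> \<not>(\<exists>u\<in>S. E v u \<and> c u = j))"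
  proof
    fix v assume v: "v \<in> S"
    show "\<exists>j. c v = i \<longrightarrow> (j \<in> {1..k} \<and> j \<noteq> i \<and> \<not>(\<exists>u\<in>S. E v u \<and> c u = j))"
    proof (cases "c v = i")
      case True
      then have "\<not> b_vertex S E c k v" using nob v by blast
      then obtain j where "j\<in>{1..k}" "j \<noteq> c v" "\<not>(\<exists>u\<in>S. E v u \<and> c u = j)"
        using v unfolding b_vertex_def by blast
      then show ?thesis using True by blast
    next
      case False
      then show ?thesis by blast
    qed
  qed
  then obtain J where J: "\<forall>v\<in>S. c v = i \<longrightarrow> (J v \<in> {1..k} \<and> J v \<noteq> i \<and> \<not>(\<exists>u\<in>S. E v u \<and> c u = J v))"
    by metis
  define c1 where "c1 v = (if c v = i then J v else c v)" for v
  define g where "g x = (if x > i then x - 1 else (x::nat))" for x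
  have cS: "c ` S = {1..k}" using pc by (simp add: proper_coloring_def)
  have img1: "c1 ` S = {1..k} - {i}"
  proof
    show "c1 ` S \<subseteq> {1..k} - {i}" using J cS c1_def by auto
    show "{1..k} - {i} \<subseteq> c1 ` S"
    proof
      fix j assume j: "j \<in> {1..k} - {i}"
      then obtain v where "v \<in> S" "c v = j" using cS by (metis DiffD1 imageE)
      then show "j \<in> c1 ` S" using j c1_def by force
    qed
  qed
  have ginj: "inj_on g ({1..k} - {i})" unfolding inj_on_def g_def by auto
  have gimg: "g ` ({1..k} - {i}) = {1..k-1}"
  proof
    show "g ` ({1..k} - {i}) \<subseteq> {1..k-1}" using i unfolding g_def by auto
    show "{1..k-1} \<subseteq> g ` ({1..k} - {i})"
    proof
      fix x assume x: "x \<in> {1..k-1}"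
      show "x \<in> g ` ({1..k} - {i})"
      proof (cases "x < i")
        case True
        then have "g x = x" "x \<in> {1..k} - {i}" using x i by (auto simp: g_def)
        then show ?thesis by force
      next
        case False
        then have "g (x+1) = x" "x+1 \<in> {1..k} - {i}" using x i by (auto simp: g_def)
        then show ?thesis by force
      qed
    qed
  qed
  have p1: "\<forall>u\<in>S. \<forall>v\<in>S. E u v \<longrightarrow> c1 u \<noteq> c1 v"
  proof (intro ballI impI)
    fix u v assume u: "u \<in> S" and v: "v \<in> S" and e: "E u v"
    have cuv: "c u \<noteq> c v" using pc u v e by (simp add: proper_coloring_def)
    show "c1 u \<noteq> c1 v"
    proof (cases "c u = i")
      case True
      then have cv: "c v \<noteq> i" using cuv by simp
      have "\<not>(\<exists>w\<in>S. E u w \<and> c w = J u)" using J u True by blast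
      then have "c v \<noteq> J u" using v e by blast
      then show ?thesis using True cv c1_def by auto
    next
      case False
      show ?thesis
      proof (cases "c v = i")
        case True
        have "E v u" using sym e by blast
        moreover have "\<not>(\<exists>w\<in>S. E v w \<and> c w = J v)" using J v True by blast
        ultimately have "c u \<noteq> J v" using u by blast
        then show ?thesis using True False c1_def by auto
      next
        case F2: False
        then show ?thesis using False cuv c1_def by auto
      qed
    qed
  qed
  have "proper_coloring S E (g \<circ> c1) (k - 1)"
    unfolding proper_coloring_def
  proof
    show "(g \<circ> c1) ` S = {1..k - 1}" using img1 gimg by (metis image_comp)
    show "\<forall>u\<in>S. \<forall>v\<in>S. E u v \<longrightarrow> (g \<circ> c1) u \<noteq> (g \<circ> c1) v"
    proof (intro ballI impI)
      fix u v assume u: "u \<in> S" and v: "v \<in> S" and e: "E u v"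
      have gi: "inj_on g (c1 ` S)" using ginj img1 by simp
      have "c1 u \<noteq> c1 v" using p1 u v e by blast
      then show "(g \<circ> c1) u \<noteq> (g \<circ> c1) v" using gi u v unfolding inj_on_def by auto
    qed
  qed
  then show ?thesis by blast
qed

lemma inj_proper:
  assumes fin: "finite S" and irr: "\<forall>v. \<not> E v v"
  shows "\<exists>c. proper_coloring S E c (card S)"
proof -
  obtain h where h: "bij_betw h S {0..<card S}" using ex_bij_betw_finite_nat[OF fin] by blast
  define c where "c v = Suc (h v)" for v
  have cS: "c ` S = {1..card S}"
  proof -
    have "c ` S = Suc ` (h ` S)" unfolding c_def by auto
    also have "\<dots> = Suc ` {0..<card S}" using h by (simp add: bij_betw_def)
    also have "\<dots> = {1..card S}" by auto
    finally show ?thesis .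
  qed
  have inj: "\<forall>u\<in>S. \<forall>v\<in>S. c u = c v \<longrightarrow> u = v" using h unfolding c_def bij_betw_def inj_on_def by auto
  have pc: "proper_coloring S E c (card S)"
    unfolding proper_coloring_def using cS inj irr by metis
  then show ?thesis by blast
qed

lemma clique_bcol:
  assumes fin: "finite S" and irr: "\<forall>v. \<not> E v v" and cl: "\<forall>x\<in>S. \<forall>y\<in>S. x \<noteq> y \<longrightarrow> E x y"
  shows "\<exists>c. b_coloring S E c (card S)"
proof -
  obtain h where h: "bij_betw h S {0..<card S}" using ex_bij_betw_finite_nat[OF fin] by blast
  define c where "c v = Suc (h v)" for v
  have cS: "c ` S = {1..card S}"
  proof -
    have "c ` S = Suc ` (h ` S)" unfolding c_def by auto
    also have "\<dots> = Suc ` {0..<card S}" using h by (simp add: bij_betw_def)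
    also have "\<dots> = {1..card S}" by auto
    finally show ?thesis .
  qed
  have inj: "\<forall>u\<in>S. \<forall>v\<in>S. c u = c v \<longrightarrow> u = v" using h unfolding c_def bij_betw_def inj_on_def by auto
  have pc: "proper_coloring S E c (card S)"
    unfolding proper_coloring_def using cS inj irr by metis
  have "\<forall>i\<in>{1..card S}. \<exists>v\<in>S. c v = i \<and> b_vertex S E c (card S) v"
  proof
    fix i assume "i \<in> {1..card S}"
    then obtain v where v: "v \<in> S" "c v = i" using cS by (metis imageE)
    have "b_vertex S E c (card S) v"
      unfolding b_vertex_def
    proof (intro conjI ballI impI)
      show "v \<in> S" by fact
      fix j assume j: "j \<in> {1..card S}" "j \<noteq> c v"
      then obtain u where u: "u \<in> S" "c u = j" using cS by (metis imageE)
      then have "u \<noteq> v" using j by auto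
      then have "E v u" using cl u(1) v(1) by metis
      then show "\<exists>u\<in>S. E v u \<and> c u = j" using u by blast
    qed
    then show "\<exists>v\<in>S. c v = i \<and> b_vertex S E c (card S) v" using v by blast
  qed
  then show ?thesis using pc unfolding b_coloring_def by blast
qed

lemma exists_bcol:
  assumes fin: "finite S" and sym: "\<forall>u v. E u v \<longrightarrow> E v u" and irr: "\<forall>v. \<not> E v v"
  shows "\<exists>k c. b_coloring S E c k"
proof -
  have ex: "\<exists>k c. proper_coloring S E c k"
    using inj_proper[where E=E, OF fin irr] by blast
  define k where "k = (LEAST k. \<exists>c. proper_coloring S E c k)"
  obtain c where pc: "proper_coloring S E c k" using LeastI_ex[OF ex] unfolding k_def by blast
  have "b_coloring S E c k"
  proof (rule ccontr)
    assume "\<not> b_coloring S E c k"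
    then obtain i where i: "i \<in> {1..k}" and nob: "\<forall>v\<in>S. c v = i \<longrightarrow> \<not> b_vertex S E c k v"
      using pc unfolding b_coloring_def by blast
    obtain c' where "proper_coloring S E c' (k - 1)" using recolor[OF sym pc i nob] by blast
    then have "k \<le> k - 1" unfolding k_def by (metis (mono_tags, lifting) Least_le)
    then show False using i by auto
  qed
  then show ?thesis by blast
qed

lemma bchrom_props:
  assumes fin: "finite S" and sym: "\<forall>u v. E u v \<longrightarrow> E v u" and irr: "\<forall>v. \<not> E v v"
  shows "(\<exists>c. b_coloring S E c (b_chromatic S E)) \<and> (\<forall>k c. b_coloring S E c k \<longrightarrow> k \<le> b_chromatic S E)"
proof -
  let ?K = "{k. \<exists>c. b_coloring S E c k}"
  have "?K \<subseteq> {0..card S}" using bcol_le_card fin by fastforce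
  then have f: "finite ?K" by (rule finite_subset) simp
  have ne: "?K \<noteq> {}" using exists_bcol[OF fin sym irr] by blast
  have "b_chromatic S E \<in> ?K" unfolding b_chromatic_def using Max_in[OF f ne] .
  moreover have "\<forall>k c. b_coloring S E c k \<longrightarrow> k \<le> b_chromatic S E"
    unfolding b_chromatic_def using Max_ge[OF f] by blast
  ultimately show ?thesis by blast
qed

lemma bchrom_r_props:
  assumes fin: "finite V" and sym: "\<forall>u v. E u v \<longrightarrow> E v u" and irr: "\<forall>v. \<not> E v v"
  shows "WW V E (b_chromatic_r V E) \<and> (\<forall>k. WW V E k \<longrightarrow> k \<le> b_chromatic_r V E)"
proof -
  let ?B = "{b_chromatic S E | S. S \<subseteq> V}"
  have eq: "?B = (\<lambda>S. b_chromatic S E) ` Pow V" by auto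
  have f: "finite ?B" unfolding eq using fin by simp
  have ne: "?B \<noteq> {}" by blast
  have "b_chromatic_r V E \<in> ?B" unfolding b_chromatic_r_def using Max_in[OF f ne] .
  then obtain S where S: "S \<subseteq> V" "b_chromatic_r V E = b_chromatic S E" by blast
  have "finite S" using S fin finite_subset by blast
  then have "WW V E (b_chromatic_r V E)" using S bchrom_props[OF _ sym irr] unfolding WW_def by metis
  moreover have "\<forall>k. WW V E k \<longrightarrow> k \<le> b_chromatic_r V E"
  proof (intro allI impI)
    fix k assume "WW V E k"
    then obtain T c where T: "T \<subseteq> V" "b_coloring T E c k" unfolding WW_def by blast
    have "finite T" using T fin finite_subset by blast
    then have "k \<le> b_chromatic T E" using T bchrom_props[OF _ sym irr] by blast
    also have "\<dots> \<le> b_chromatic_r V E" unfolding b_chromatic_r_def using Max_ge[OF f] T by blast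
    finally show "k \<le> b_chromatic_r V E" .
  qed
  ultimately show ?thesis by blast
qed

lemma bcol_clique:
  assumes sym: "\<forall>u v. E u v \<longrightarrow> E v u" and bc: "b_coloring S E c k" and fin: "finite S"
    and cs: "card S \<le> k + 1"
  shows "\<exists>x. (\<forall>i\<in>{1..k}. x i \<in> S \<and> c (x i) = i) \<and> (\<forall>i\<in>{1..k}. \<forall>j\<in>{1..k}. i \<noteq> j \<longrightarrow> E (x i) (x j))"
proof -
  have "\<forall>i\<in>{1..k}. \<exists>v. v \<in> S \<and> c v = i \<and> b_vertex S E c k v" using bc unfolding b_coloring_def by blast
  then obtain x where x: "\<forall>i\<in>{1..k}. x i \<in> S \<and> c (x i) = i \<and> b_vertex S E c k (x i)" by metis
  have injx: "inj_on x {1..k}" unfolding inj_on_def using x by metis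
  have cardX: "card (x ` {1..k}) = k" using card_image[OF injx] by simp
  have "\<forall>i\<in>{1..k}. \<forall>j\<in>{1..k}. i \<noteq> j \<longrightarrow> E (x i) (x j)"
  proof (intro ballI impI)
    fix i j assume i: "i \<in> {1..k}" and j: "j \<in> {1..k}" and ij: "i \<noteq> j"
    show "E (x i) (x j)"
    proof (rule ccontr)
      assume ne: "\<not> E (x i) (x j)"
      then have ne2: "\<not> E (x j) (x i)" using sym by blast
      have ci: "c (x i) = i" "c (x j) = j" using x i j by auto
      obtain u where u: "u \<in> S" "E (x i) u" "c u = j"
        using x i j ij ci unfolding b_vertex_def by metis
      obtain w where w: "w \<in> S" "E (x j) w" "c w = i"
        using x i j ij ci unfolding b_vertex_def by metis
      have uX: "u \<notin> x ` {1..k}"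
      proof
        assume "u \<in> x ` {1..k}"
        then obtain l where "l \<in> {1..k}" "u = x l" by blast
        then have "l = j" using x u by auto
        then show False using \<open>u = x l\<close> u ne by simp
      qed
      have wX: "w \<notin> x ` {1..k}"
      proof
        assume "w \<in> x ` {1..k}"
        then obtain l where "l \<in> {1..k}" "w = x l" by blast
        then have "l = i" using x w by auto
        then show False using \<open>w = x l\<close> w ne2 by simp
      qed
      have uw: "u \<noteq> w" using u w ij by auto
      have sub: "insert u (insert w (x ` {1..k})) \<subseteq> S" using u w x by auto
      have "card (insert u (insert w (x ` {1..k}))) = k + 2"
        using uX wX uw cardX by simp
      then have "k + 2 \<le> card S" using card_mono[OF fin sub] by simp
      then show False using cs by simp
    qed
  qed
  then show ?thesis using x by blast
qed

lemma bcol_edge: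
  assumes "b_coloring S E c k" "2 \<le> k"
  shows "\<exists>x\<in>S. \<exists>y\<in>S. E x y"
proof -
  have o: "(1::nat) \<in> {1..k}" "(2::nat) \<in> {1..k}" using assms(2) by auto
  obtain v where v: "v \<in> S" "c v = 1" "b_vertex S E c k v" using assms(1) o(1) unfolding b_coloring_def by blast
  have "(2::nat) \<noteq> c v" using v by simp
  then obtain u where "u \<in> S" "E v u" using o(2) v(3) unfolding b_vertex_def by blast
  then show ?thesis using v by blast
qed

lemma three_eq: "{1..3::nat} = {1,2,3}" by auto

lemma bcol3_atom:
  assumes bc: "b_coloring S E c 3" and fin: "finite S" and cs: "card S \<le> 5"
  shows "b_atom S E 3"
proof -
  have "\<forall>i\<in>{1..3}. \<exists>v. v \<in> S \<and> c v = i \<and> b_vertex S E c 3 v" using bc unfolding b_coloring_def by blast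
  then obtain x where x: "\<forall>i\<in>{1..3}. x i \<in> S \<and> c (x i) = i \<and> b_vertex S E c 3 (x i)" by metis
  have cS: "c ` S = {1..3}" and pr: "\<forall>u\<in>S. \<forall>v\<in>S. E u v \<longrightarrow> c u \<noteq> c v"
    using bc unfolding b_coloring_def proper_coloring_def by blast+
  define D where "D i = {v \<in> S. c v = i}" for i
  have "(\<Union>i\<in>{1..3}. D i) = S" using cS unfolding D_def by blast
  moreover have "\<forall>i\<in>{1..3}. \<forall>j\<in>{1..3}. i \<noteq> j \<longrightarrow> D i \<inter> D j = {}" unfolding D_def by auto
  moreover have "\<forall>i\<in>{1..3}. x i \<in> D i \<and> independent E (D i) \<and> card (D i) \<le> 3"
  proof
    fix i assume i: "i \<in> {1..3::nat}"
    have xi: "x i \<in> D i" using x i unfolding D_def by auto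
    have ind: "independent E (D i)" using pr unfolding independent_def D_def by blast
    let ?Y = "x ` ({1..3} - {i})"
    have injx: "inj_on x ({1..3} - {i})" unfolding inj_on_def using x by (metis DiffD1)
    have c2: "card ({1..3::nat} - {i}) = 2" using i by simp
    have cY: "card ?Y = 2" using card_image[OF injx] c2 by simp
    have disj: "D i \<inter> ?Y = {}" unfolding D_def using x by auto
    have sub: "D i \<union> ?Y \<subseteq> S" unfolding D_def using x by auto
    have fD: "finite (D i)" using fin unfolding D_def by simp
    have "card (D i \<union> ?Y) = card (D i) + card ?Y" using card_Un_disjoint[OF fD _ disj] by simp
    moreover have "card (D i \<union> ?Y) \<le> card S" using card_mono[OF fin sub] .
    ultimately have "card (D i) \<le> 3" using cY cs by simp
    then show "x i \<in> D i \<and> independent E (D i) \<and> card (D i) \<le> 3" using xi ind by blast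
  qed
  moreover have "\<forall>i\<in>{1..3}. \<forall>j\<in>{1..3}. i \<noteq> j \<longrightarrow> (\<exists>u\<in>D j. E (x i) u)"
  proof (intro ballI impI)
    fix i j assume i: "i \<in> {1..3::nat}" and j: "j \<in> {1..3::nat}" and ij: "i \<noteq> j"
    have "b_vertex S E c 3 (x i)" "c (x i) = i" using x i by auto
    then obtain u where "u \<in> S" "E (x i) u" "c u = j" using j ij unfolding b_vertex_def by metis
    then show "\<exists>u\<in>D j. E (x i) u" unfolding D_def by blast
  qed
  ultimately show ?thesis unfolding b_atom_def by (intro exI[of _ D] exI[of _ x]) blast
qed

lemma atom_bcol3:
  assumes "b_atom S E 3"
  shows "\<exists>c. b_coloring S E c 3"
proof -
  obtain D :: "nat \<Rightarrow> _" and cc where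
    un: "(\<Union>i\<in>{1..3}. D i) = S" and
    dj: "\<forall>i\<in>{1..3}. \<forall>j\<in>{1..3}. i \<noteq> j \<longrightarrow> D i \<inter> D j = {}" and
    cd: "\<forall>i\<in>{1..3}. cc i \<in> D i \<and> independent E (D i) \<and> card (D i) \<le> 3" and
    nb: "\<forall>i\<in>{1..3}. \<forall>j\<in>{1..3}. i \<noteq> j \<longrightarrow> (\<exists>u\<in>D j. E (cc i) u)"
    using assms unfolding b_atom_def by blast
  define c where "c v = (if v \<in> D 1 then 1 else if v \<in> D 2 then 2 else (3::nat))" for v
  have cD: "\<forall>i\<in>{1..3}. \<forall>v\<in>D i. c v = i"
  proof (intro ballI)
    fix i v assume i: "i \<in> {1..3::nat}" and v: "v \<in> D i"
    have i123: "i = 1 \<or> i = 2 \<or> i = 3" using i by auto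
    have m: "(1::nat) \<in> {1..3}" "(2::nat) \<in> {1..3}" "(3::nat) \<in> {1..3}" by auto
    have d12: "D 1 \<inter> D 2 = {}" using dj[rule_format, OF m(1) m(2)] by simp
    have d13: "D 1 \<inter> D 3 = {}" using dj[rule_format, OF m(1) m(3)] by simp
    have d23: "D 2 \<inter> D 3 = {}" using dj[rule_format, OF m(2) m(3)] by simp
    note i123
    moreover have "i = 2 \<Longrightarrow> v \<notin> D 1" using d12 v by blast
    moreover have "i = 3 \<Longrightarrow> v \<notin> D 1 \<and> v \<notin> D 2" using d13 d23 v by blast
    ultimately show "c v = i" unfolding c_def using v by auto
  qed
  have mem: "\<forall>v\<in>S. \<exists>i\<in>{1..3}. v \<in> D i" using un by blast
  have subS: "\<forall>i\<in>{1..3}. D i \<subseteq> S" using un by blast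
  have cS: "c ` S = {1..3}"
  proof
    show "c ` S \<subseteq> {1..3}" unfolding c_def by auto
    show "{1..3} \<subseteq> c ` S"
    proof
      fix i assume i: "i \<in> {1..3::nat}"
      then have "cc i \<in> S" "c (cc i) = i" using cd cD subS by blast+
      then show "i \<in> c ` S" by force
    qed
  qed
  have pr: "\<forall>u\<in>S. \<forall>v\<in>S. E u v \<longrightarrow> c u \<noteq> c v"
  proof (intro ballI impI)
    fix u v assume u: "u \<in> S" and v: "v \<in> S" and e: "E u v"
    obtain i where i: "i \<in> {1..3}" "u \<in> D i" using mem u by blast
    obtain j where j: "j \<in> {1..3}" "v \<in> D j" using mem v by blast
    show "c u \<noteq> c v"
    proof
      assume "c u = c v"
      then have "i = j" using cD i j by metis
      then show False using cd i j e unfolding independent_def by blast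
    qed
  qed
  have "\<forall>i\<in>{1..3}. \<exists>v\<in>S. c v = i \<and> b_vertex S E c 3 v"
  proof
    fix i assume i: "i \<in> {1..3::nat}"
    have v: "cc i \<in> S" "c (cc i) = i" using cd cD subS i by blast+
    have "b_vertex S E c 3 (cc i)"
      unfolding b_vertex_def
    proof (intro conjI ballI impI)
      show "cc i \<in> S" by (rule v(1))
      fix j assume j: "j \<in> {1..3}" "j \<noteq> c (cc i)"
      then obtain u where "u \<in> D j" "E (cc i) u" using nb i v(2) by metis
      then show "\<exists>u\<in>S. E (cc i) u \<and> c u = j" using cD subS j(1) by blast
    qed
    then show "\<exists>v\<in>S. c v = i \<and> b_vertex S E c 3 v" using v by blast
  qed
  then have "b_coloring S E c 3" using cS pr unfolding b_coloring_def proper_coloring_def by blast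
  then show ?thesis by blast
qed

lemma min_atom:
  assumes fin: "finite V" and sub: "S \<subseteq> V" and at: "b_atom S E t"
  shows "\<exists>S'. S' \<subseteq> V \<and> minimal_b_atom S' E t"
  using sub at
proof (induction "card S" arbitrary: S rule: less_induct)
  case less
  show ?case
  proof (cases "minimal_b_atom S E t")
    case True
    then show ?thesis using less.prems by blast
  next
    case False
    then obtain S' where S': "S' \<subset> S" "b_atom S' E t" using less.prems unfolding minimal_b_atom_def by blast
    have "finite S" using less.prems fin finite_subset by blast
    then have "card S' < card S" using S' psubset_card_mono by blast
    then show ?thesis using less.hyps S' less.prems by blast
  qed
qed

lemma T3:
  assumes sym: "\<forall>u v. E u v \<longrightarrow> E v u" and irr: "\<forall>v. \<not> E v v"
    and "x \<in> {p,q,r}" "y \<in> {p,q,r}" "z \<in> {p,q,r}" "E x y" "E y z" "E x z"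
  shows "E p q \<and> E p r \<and> E q r"
  using assms by auto

lemma T4:
  assumes sym: "\<forall>u v. E u v \<longrightarrow> E v u" and irr: "\<forall>v. \<not> E v v"
    and "x \<in> {p,q,r,s}" "y \<in> {p,q,r,s}" "z \<in> {p,q,r,s}" "E x y" "E y z" "E x z"
  shows "(E p q \<and> E p r \<and> E q r) \<or> (E p q \<and> E p s \<and> E q s) \<or> (E p r \<and> E p s \<and> E r s) \<or> (E q r \<and> E q s \<and> E r s)"
  using assms(3-5)
  apply (elim insertE emptyE)
  using assms(6-8) sym irr by blast+

lemma prop5:
  fixes ab ac ad ae bc bd be cd ce de :: bool
  assumes "(bc\<and>bd\<and>cd) \<or> (bc\<and>be\<and>ce) \<or> (bd\<and>be\<and>de) \<or> (cd\<and>ce\<and>de)"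
    and "(ac\<and>ad\<and>cd) \<or> (ac\<and>ae\<and>ce) \<or> (ad\<and>ae\<and>de) \<or> (cd\<and>ce\<and>de)"
    and "(ab\<and>ad\<and>bd) \<or> (ab\<and>ae\<and>be) \<or> (ad\<and>ae\<and>de) \<or> (bd\<and>be\<and>de)"
    and "(ab\<and>ac\<and>bc) \<or> (ab\<and>ae\<and>be) \<or> (ac\<and>ae\<and>ce) \<or> (bc\<and>be\<and>ce)"
    and "(ab\<and>ac\<and>bc) \<or> (ab\<and>ad\<and>bd) \<or> (ac\<and>ad\<and>cd) \<or> (bc\<and>bd\<and>cd)"
  shows "(ab\<and>ac\<and>ad\<and>bc\<and>bd\<and>cd) \<or> (ab\<and>ac\<and>ae\<and>bc\<and>be\<and>ce) \<or> (ab\<and>ad\<and>ae\<and>bd\<and>be\<and>de)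
    \<or> (ac\<and>ad\<and>ae\<and>cd\<and>ce\<and>de) \<or> (bc\<and>bd\<and>be\<and>cd\<and>ce\<and>de)"
  using assms by (smt (verit))

lemma card4_obtain:
  assumes "card A = 4"
  obtains a b c d where "A = {a,b,c,d}" "a \<noteq> b" "a \<noteq> c" "a \<noteq> d" "b \<noteq> c" "b \<noteq> d" "c \<noteq> d"
proof -
  have "A \<noteq> {}" using assms by auto
  then obtain a where a: "a \<in> A" by blast
  have fA: "finite A" using assms by (metis card.infinite zero_neq_numeral)
  have "card (A - {a}) = 3" using assms a fA by simp
  then obtain b c d where bcd: "A - {a} = {b,c,d}" "b \<noteq> c" "c \<noteq> d" "b \<noteq> d" unfolding card_3_iff by blast
  have "A = {a,b,c,d}" using bcd a by blast
  moreover have "a \<noteq> b" "a \<noteq> c" "a \<noteq> d" using bcd by blast+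
  ultimately show ?thesis using that bcd by blast
qed

lemma card5_obtain:
  assumes "card A = 5"
  obtains a b c d e where "A = {a,b,c,d,e}" "a \<noteq> b" "a \<noteq> c" "a \<noteq> d" "a \<noteq> e" "b \<noteq> c" "b \<noteq> d" "b \<noteq> e" "c \<noteq> d" "c \<noteq> e" "d \<noteq> e"
proof -
  have "A \<noteq> {}" using assms by auto
  then obtain a where a: "a \<in> A" by blast
  have fA: "finite A" using assms by (metis card.infinite zero_neq_numeral)
  have "card (A - {a}) = 4" using assms a fA by simp
  then obtain b c d e where bcd: "A - {a} = {b,c,d,e}" "b \<noteq> c" "b \<noteq> d" "b \<noteq> e" "c \<noteq> d" "c \<noteq> e" "d \<noteq> e"
    by (rule card4_obtain)
  have "A = {a,b,c,d,e}" using bcd a by blast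
  moreover have "a \<noteq> b" "a \<noteq> c" "a \<noteq> d" "a \<noteq> e" using bcd by blast+
  ultimately show ?thesis using that bcd by blast
qed

lemma K4_from_tri:
  assumes sym: "\<forall>u v. E u v \<longrightarrow> E v u" and irr: "\<forall>v. \<not> E v v"
    and c45: "card V = 4 \<or> card V = 5"
    and tri: "\<forall>v\<in>V. \<exists>x y z. x \<in> V - {v} \<and> y \<in> V - {v} \<and> z \<in> V - {v} \<and> E x y \<and> E y z \<and> E x z"
  shows "\<exists>Q \<subseteq> V. card Q = 4 \<and> (\<forall>a\<in>Q. \<forall>b\<in>Q. a \<noteq> b \<longrightarrow> E a b)"
  using c45
proof
  assume c4: "card V = 4"
  then obtain a b c d where V: "V = {a,b,c,d}" and dist: "a \<noteq> b" "a \<noteq> c" "a \<noteq> d" "b \<noteq> c" "b \<noteq> d" "c \<noteq> d"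
    by (rule card4_obtain)
  have "a \<in> V" "V - {a} = {b,c,d}" using V dist by auto
  then obtain x y z where xyz: "x \<in> {b,c,d}" "y \<in> {b,c,d}" "z \<in> {b,c,d}" "E x y" "E y z" "E x z"
    using tri by (metis (no_types, lifting))
  have ta: "E b c \<and> E b d \<and> E c d"
    by (rule T3[OF sym irr xyz])
  have "b \<in> V" "V - {b} = {a,c,d}" using V dist by auto
  then obtain x y z where xyz: "x \<in> {a,c,d}" "y \<in> {a,c,d}" "z \<in> {a,c,d}" "E x y" "E y z" "E x z"
    using tri by (metis (no_types, lifting))
  have tb: "E a c \<and> E a d \<and> E c d"
    by (rule T3[OF sym irr xyz])
  have "c \<in> V" "V - {c} = {a,b,d}" using V dist by auto
  then obtain x y z where xyz: "x \<in> {a,b,d}" "y \<in> {a,b,d}" "z \<in> {a,b,d}" "E x y" "E y z" "E x z"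
    using tri by (metis (no_types, lifting))
  have tc: "E a b \<and> E a d \<and> E b d"
    by (rule T3[OF sym irr xyz])
  have "\<forall>x\<in>V. \<forall>y\<in>V. x \<noteq> y \<longrightarrow> E x y" using V ta tb tc sym by auto
  then show ?thesis using c4 by blast
next
  assume c5: "card V = 5"
  then obtain a b c d e where V: "V = {a,b,c,d,e}" and dist: "a \<noteq> b" "a \<noteq> c" "a \<noteq> d" "a \<noteq> e" "b \<noteq> c" "b \<noteq> d" "b \<noteq> e" "c \<noteq> d" "c \<noteq> e" "d \<noteq> e"
    by (rule card5_obtain)
  have "a \<in> V" "V - {a} = {b,c,d,e}" using V dist by auto
  then obtain x y z where xyz: "x \<in> {b,c,d,e}" "y \<in> {b,c,d,e}" "z \<in> {b,c,d,e}" "E x y" "E y z" "E x z"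
    using tri by (metis (no_types, lifting))
  have ta: "(E b c \<and> E b d \<and> E c d) \<or> (E b c \<and> E b e \<and> E c e) \<or> (E b d \<and> E b e \<and> E d e) \<or> (E c d \<and> E c e \<and> E d e)"
    by (rule T4[OF sym irr xyz])
  have "b \<in> V" "V - {b} = {a,c,d,e}" using V dist by auto
  then obtain x y z where xyz: "x \<in> {a,c,d,e}" "y \<in> {a,c,d,e}" "z \<in> {a,c,d,e}" "E x y" "E y z" "E x z"
    using tri by (metis (no_types, lifting))
  have tb: "(E a c \<and> E a d \<and> E c d) \<or> (E a c \<and> E a e \<and> E c e) \<or> (E a d \<and> E a e \<and> E d e) \<or> (E c d \<and> E c e \<and> E d e)"
    by (rule T4[OF sym irr xyz])
  have "c \<in> V" "V - {c} = {a,b,d,e}" using V dist by auto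
  then obtain x y z where xyz: "x \<in> {a,b,d,e}" "y \<in> {a,b,d,e}" "z \<in> {a,b,d,e}" "E x y" "E y z" "E x z"
    using tri by (metis (no_types, lifting))
  have tc: "(E a b \<and> E a d \<and> E b d) \<or> (E a b \<and> E a e \<and> E b e) \<or> (E a d \<and> E a e \<and> E d e) \<or> (E b d \<and> E b e \<and> E d e)"
    by (rule T4[OF sym irr xyz])
  have "d \<in> V" "V - {d} = {a,b,c,e}" using V dist by auto
  then obtain x y z where xyz: "x \<in> {a,b,c,e}" "y \<in> {a,b,c,e}" "z \<in> {a,b,c,e}" "E x y" "E y z" "E x z"
    using tri by (metis (no_types, lifting))
  have td: "(E a b \<and> E a c \<and> E b c) \<or> (E a b \<and> E a e \<and> E b e) \<or> (E a c \<and> E a e \<and> E c e) \<or> (E b c \<and> E b e \<and> E c e)"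
    by (rule T4[OF sym irr xyz])
  have "e \<in> V" "V - {e} = {a,b,c,d}" using V dist by auto
  then obtain x y z where xyz: "x \<in> {a,b,c,d}" "y \<in> {a,b,c,d}" "z \<in> {a,b,c,d}" "E x y" "E y z" "E x z"
    using tri by (metis (no_types, lifting))
  have te: "(E a b \<and> E a c \<and> E b c) \<or> (E a b \<and> E a d \<and> E b d) \<or> (E a c \<and> E a d \<and> E c d) \<or> (E b c \<and> E b d \<and> E c d)"
    by (rule T4[OF sym irr xyz])
  have K: "(E a b\<and>E a c\<and>E a d\<and>E b c\<and>E b d\<and>E c d) \<or> (E a b\<and>E a c\<and>E a e\<and>E b c\<and>E b e\<and>E c e) \<or> (E a b\<and>E a d\<and>E a e\<and>E b d\<and>E b e\<and>E d e)
    \<or> (E a c\<and>E a d\<and>E a e\<and>E c d\<and>E c e\<and>E d e) \<or> (E b c\<and>E b d\<and>E b e\<and>E c d\<and>E c e\<and>E d e)"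
    by (rule prop5[OF ta tb tc td te])
  have Q: "\<And>p q r t. {p,q,r,t} \<subseteq> V \<Longrightarrow> p \<noteq> q \<Longrightarrow> p \<noteq> r \<Longrightarrow> p \<noteq> t \<Longrightarrow> q \<noteq> r \<Longrightarrow> q \<noteq> t \<Longrightarrow> r \<noteq> t
     \<Longrightarrow> E p q \<Longrightarrow> E p r \<Longrightarrow> E p t \<Longrightarrow> E q r \<Longrightarrow> E q t \<Longrightarrow> E r t \<Longrightarrow> \<exists>Q \<subseteq> V. card Q = 4 \<and> (\<forall>a\<in>Q. \<forall>b\<in>Q. a \<noteq> b \<longrightarrow> E a b)"
  proof -
    fix p q r t assume sub: "{p,q,r,t} \<subseteq> V" and d: "p \<noteq> q" "p \<noteq> r" "p \<noteq> t" "q \<noteq> r" "q \<noteq> t" "r \<noteq> t"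
      and e: "E p q" "E p r" "E p t" "E q r" "E q t" "E r t"
    have "card {p,q,r,t} = 4" using d by simp
    moreover have "\<forall>x\<in>{p,q,r,t}. \<forall>y\<in>{p,q,r,t}. x \<noteq> y \<longrightarrow> E x y" using e sym by auto
    ultimately show "\<exists>Q \<subseteq> V. card Q = 4 \<and> (\<forall>a\<in>Q. \<forall>b\<in>Q. a \<noteq> b \<longrightarrow> E a b)" using sub by blast
  qed
  show ?thesis using K
  proof (elim disjE)
    assume "E a b\<and>E a c\<and>E a d\<and>E b c\<and>E b d\<and>E c d" then show ?thesis by (intro Q[of a b c d]) (use V dist in auto)
  next
    assume "E a b\<and>E a c\<and>E a e\<and>E b c\<and>E b e\<and>E c e" then show ?thesis by (intro Q[of a b c e]) (use V dist in auto)
  next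
    assume "E a b\<and>E a d\<and>E a e\<and>E b d\<and>E b e\<and>E d e" then show ?thesis by (intro Q[of a b d e]) (use V dist in auto)
  next
    assume "E a c\<and>E a d\<and>E a e\<and>E c d\<and>E c e\<and>E d e" then show ?thesis by (intro Q[of a c d e]) (use V dist in auto)
  next
    assume "E b c\<and>E b d\<and>E b e\<and>E c d\<and>E c e\<and>E d e" then show ?thesis by (intro Q[of b c d e]) (use V dist in auto)
  qed
qed

theorem mainTheorem13:
  fixes V :: "'a set" and E :: "'a \<Rightarrow> 'a \<Rightarrow> bool"
  assumes "graph V E"
    and "4 \<le> card V" and "card V \<le> 5"
    and "\<exists>u v. E u v"
  shows "(\<forall>v\<in>V. b_chromatic_r (V - {v}) E = b_chromatic_r V E + card V div 2 - 2)
     \<longleftrightarrow> ((\<exists>a b x y. E a b \<and> E x y \<and> {a, b} \<inter> {x, y} = {})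
          \<and> \<not> (\<exists>S. S \<subseteq> V \<and> minimal_b_atom S E 3))"
proof -
  have fin: "finite V" and sym: "\<forall>u v. E u v \<longrightarrow> E v u" and irr: "\<forall>v. \<not> E v v"
    and inV: "\<forall>u v. E u v \<longrightarrow> u \<in> V \<and> v \<in> V" using assms(1) unfolding graph_def by auto
  have c45: "card V = 4 \<or> card V = 5" using assms(2,3) by arith
  define m where "m = b_chromatic_r V E"
  have Rm: "WW V E m" "\<forall>k. WW V E k \<longrightarrow> k \<le> m" using bchrom_r_props[OF fin sym irr] m_def by auto
  have Rv: "WW (V-{v}) E (b_chromatic_r (V-{v}) E) \<and> (\<forall>k. WW (V-{v}) E k \<longrightarrow> k \<le> b_chromatic_r (V-{v}) E)" for v
    using bchrom_r_props[OF _ sym irr] fin by blast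
  have monoW: "WW (V-{v}) E k \<Longrightarrow> WW V E k" for v k unfolding WW_def by blast
  have div2: "card V div 2 = 2" using c45 by auto
  have eqv: "b_chromatic_r (V-{v}) E = m \<longleftrightarrow> WW (V-{v}) E m" for v
  proof
    assume "b_chromatic_r (V-{v}) E = m" then show "WW (V-{v}) E m" using Rv by metis
  next
    assume a: "WW (V-{v}) E m"
    have "m \<le> b_chromatic_r (V-{v}) E" using Rv a by blast
    moreover have "b_chromatic_r (V-{v}) E \<le> m" using Rv monoW Rm(2) by blast
    ultimately show "b_chromatic_r (V-{v}) E = m" by simp
  qed
  have LHS: "(\<forall>v\<in>V. b_chromatic_r (V - {v}) E = b_chromatic_r V E + card V div 2 - 2) \<longleftrightarrow> (\<forall>v\<in>V. WW (V-{v}) E m)"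
    using eqv div2 m_def by simp
  have subfin: "finite S \<and> card S \<le> card V" if "S \<subseteq> V" for S
    using that fin finite_subset card_mono by blast
  have ATOM: "(\<exists>S. S \<subseteq> V \<and> minimal_b_atom S E 3) \<longleftrightarrow> WW V E 3"
  proof
    assume "\<exists>S. S \<subseteq> V \<and> minimal_b_atom S E 3"
    then obtain S where S: "S \<subseteq> V" "minimal_b_atom S E 3" by blast
    have "b_atom S E 3" using S(2) unfolding minimal_b_atom_def by blast
    then obtain c where "b_coloring S E c 3" using atom_bcol3 by blast
    then show "WW V E 3" unfolding WW_def using S(1) by blast
  next
    assume "WW V E 3"
    then obtain S c where S: "S \<subseteq> V" "b_coloring S E c 3" unfolding WW_def by blast
    have "finite S" "card S \<le> 5" using subfin[OF S(1)] assms(3) by auto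
    then have "b_atom S E 3" using bcol3_atom S(2) by blast
    then obtain S' where "S' \<subseteq> V" "minimal_b_atom S' E 3" using min_atom[OF fin S(1)] by blast
    then show "\<exists>S. S \<subseteq> V \<and> minimal_b_atom S E 3" by blast
  qed
  have CL: "WW V E (card S)" if "S \<subseteq> V" "\<forall>x\<in>S. \<forall>y\<in>S. x \<noteq> y \<longrightarrow> E x y" for S
    using clique_bcol[where E=E, OF _ irr that(2)] subfin[OF that(1)] that(1) unfolding WW_def by blast
  show ?thesis
  proof (cases "\<exists>k\<ge>3. WW V E k")
    case True
    then obtain k where k: "k \<ge> 3" "WW V E k" by blast
    then have m3: "m \<ge> 3" using Rm by force
    have W3: "WW V E 3"
    proof (cases "m = 3")
      case True then show ?thesis using Rm by simp
    next
      case False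
      obtain S c where S: "S \<subseteq> V" "b_coloring S E c m" using Rm(1) unfolding WW_def by blast
      have fS: "finite S" and cS: "card S \<le> m + 1" using subfin[OF S(1)] assms(3) False m3 by auto
      obtain x where x: "\<forall>i\<in>{1..m}. x i \<in> S \<and> c (x i) = i"
        and xe: "\<forall>i\<in>{1..m}. \<forall>j\<in>{1..m}. i \<noteq> j \<longrightarrow> E (x i) (x j)"
        using bcol_clique[OF sym S(2) fS cS] by blast
      have mem: "(1::nat) \<in> {1..m}" "(2::nat) \<in> {1..m}" "(3::nat) \<in> {1..m}" using m3 by auto
      have col: "c (x 1) = 1" "c (x 2) = 2" "c (x 3) = 3" using x mem by auto
      have d: "x 1 \<noteq> x 2" "x 1 \<noteq> x 3" "x 2 \<noteq> x 3" proof -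
        have "c (x 1) \<noteq> c (x 2)" "c (x 1) \<noteq> c (x 3)" "c (x 2) \<noteq> c (x 3)" using col by simp_all
        then show "x 1 \<noteq> x 2" "x 1 \<noteq> x 3" "x 2 \<noteq> x 3" by auto
      qed
      have e: "E (x 1) (x 2)" "E (x 1) (x 3)" "E (x 2) (x 3)" using xe mem by auto
      have "card {x 1, x 2, x 3} = 3" using d by simp
      moreover have "{x 1, x 2, x 3} \<subseteq> V" using x mem S(1) by auto
      moreover have "\<forall>a\<in>{x 1, x 2, x 3}. \<forall>b\<in>{x 1, x 2, x 3}. a \<noteq> b \<longrightarrow> E a b" using e sym by auto
      ultimately show ?thesis using CL by metis
    qed
    have LHSf: "\<not> (\<forall>v\<in>V. WW (V-{v}) E m)"
    proof
      assume A: "\<forall>v\<in>V. WW (V-{v}) E m"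
      have key: "m \<le> card V - 1 \<and> (\<exists>x. (\<forall>i\<in>{1..m}. x i \<in> V - {v}) \<and> inj_on x {1..m} \<and> (\<forall>i\<in>{1..m}. \<forall>j\<in>{1..m}. i \<noteq> j \<longrightarrow> E (x i) (x j)))"
        if v: "v \<in> V" for v
      proof -
        obtain S c where S: "S \<subseteq> V - {v}" "b_coloring S E c m" using A v unfolding WW_def by blast
        have fS: "finite S" using S(1) fin finite_subset by blast
        have "card S \<le> card (V - {v})" using S(1) fin card_mono by blast
        also have "\<dots> = card V - 1" using v fin by simp
        finally have cS: "card S \<le> card V - 1" .
        have mle: "m \<le> card S" using bcol_le_card[OF S(2) fS] .
        have cS1: "card S \<le> m + 1" using cS m3 assms(3) by arith
        obtain x where x: "\<forall>i\<in>{1..m}. x i \<in> S \<and> c (x i) = i"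
          and xe: "\<forall>i\<in>{1..m}. \<forall>j\<in>{1..m}. i \<noteq> j \<longrightarrow> E (x i) (x j)"
          using bcol_clique[OF sym S(2) fS cS1] by blast
        have inj: "inj_on x {1..m}"
        proof (rule inj_onI)
          fix i j assume "i \<in> {1..m}" "j \<in> {1..m}" "x i = x j"
          then show "i = j" using x by metis
        qed
        have m1: "m \<le> card V - 1" using mle cS by simp
        have xs: "\<forall>i\<in>{1..m}. x i \<in> V - {v}" using x S(1) by blast
        show ?thesis using m1 xs inj xe by blast
      qed
      have "V \<noteq> {}" using assms(2) by auto
      then obtain v0 where v0: "v0 \<in> V" by blast
      have m0: "m \<le> card V - 1" using key[OF v0] by blast
      then have m4: "m \<le> 4" using assms(3) by arith
      show False
      proof (cases "m = 4")
        case True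
        have c5: "card V = 5" using m0 True c45 by arith
        have cl: "\<forall>a\<in>V - {v}. \<forall>b\<in>V - {v}. a \<noteq> b \<longrightarrow> E a b" if v: "v \<in> V" for v
        proof -
          obtain x where x: "\<forall>i\<in>{1..m}. x i \<in> V - {v}" "inj_on x {1..m}"
            "\<forall>i\<in>{1..m}. \<forall>j\<in>{1..m}. i \<noteq> j \<longrightarrow> E (x i) (x j)" using key[OF v] by blast
          have sub: "x ` {1..m} \<subseteq> V - {v}" using x(1) by blast
          have "card (x ` {1..m}) = 4" using card_image[OF x(2)] True by simp
          moreover have "card (V - {v}) = 4" using c5 v fin by simp
          ultimately have "x ` {1..m} = V - {v}" using card_subset_eq[OF _ sub] fin by simp
          show ?thesis
          proof (intro ballI impI)
            fix a b assume ab: "a \<in> V - {v}" "b \<in> V - {v}" "a \<noteq> b"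
            obtain i where i: "i \<in> {1..m}" "a = x i" using ab(1) \<open>x ` {1..m} = V - {v}\<close> by (metis imageE)
            obtain j where j: "j \<in> {1..m}" "b = x j" using ab(2) \<open>x ` {1..m} = V - {v}\<close> by (metis imageE)
            have "i \<noteq> j" using i j ab(3) by blast
            then show "E a b" using x(3) i j by blast
          qed
        qed
        have "\<forall>a\<in>V. \<forall>b\<in>V. a \<noteq> b \<longrightarrow> E a b"
        proof (intro ballI impI)
          fix a b assume a: "a \<in> V" and b: "b \<in> V" and ab: "a \<noteq> b"
          have "card (V - {a,b}) = 3" using c5 a b ab fin by (simp add: card_Diff_subset)
          then have "V - {a,b} \<noteq> {}" by (metis card.empty zero_neq_numeral)
          then obtain v where "v \<in> V - {a,b}" by blast
          then show "E a b" using cl a b ab by blast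
        qed
        then have "WW V E 5" using CL[of V] c5 by simp
        then show False using Rm(2) True by fastforce
      next
        case False
        then have mm: "m = 3" using m3 m4 by simp
        have "\<forall>v\<in>V. \<exists>x y z. x \<in> V - {v} \<and> y \<in> V - {v} \<and> z \<in> V - {v} \<and> E x y \<and> E y z \<and> E x z"
        proof
          fix v assume v: "v \<in> V"
          obtain x where x: "\<forall>i\<in>{1..m}. x i \<in> V - {v}"
            "\<forall>i\<in>{1..m}. \<forall>j\<in>{1..m}. i \<noteq> j \<longrightarrow> E (x i) (x j)" using key[OF v] by blast
          have mem: "(1::nat) \<in> {1..m}" "(2::nat) \<in> {1..m}" "(3::nat) \<in> {1..m}" using mm by auto
          show "\<exists>x y z. x \<in> V - {v} \<and> y \<in> V - {v} \<and> z \<in> V - {v} \<and> E x y \<and> E y z \<and> E x z"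
            using x mem by (intro exI[of _ "x 1"] exI[of _ "x 2"] exI[of _ "x 3"]) auto
        qed
        then obtain Q where "Q \<subseteq> V" "card Q = 4" "\<forall>a\<in>Q. \<forall>b\<in>Q. a \<noteq> b \<longrightarrow> E a b"
          using K4_from_tri[OF sym irr c45] by blast
        then have "WW V E 4" using CL by metis
        then show False using Rm(2) mm by fastforce
      qed
    qed
    show ?thesis using LHS LHSf ATOM W3 by blast
  next
    case False
    then have nW3: "\<not> WW V E 3" by blast
    have noatom: "\<not> (\<exists>S. S \<subseteq> V \<and> minimal_b_atom S E 3)" using ATOM nW3 by blast
    have notri: "\<not> (E x y \<and> E y z \<and> E x z)" for x y z
    proof
      assume e: "E x y \<and> E y z \<and> E x z"
      then have d: "x \<noteq> y" "y \<noteq> z" "x \<noteq> z" using irr by auto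
      have "{x,y,z} \<subseteq> V" using e inV by auto
      moreover have "\<forall>a\<in>{x,y,z}. \<forall>b\<in>{x,y,z}. a \<noteq> b \<longrightarrow> E a b" using e sym by auto
      ultimately have "WW V E (card {x,y,z})" by (rule CL)
      moreover have "card {x,y,z} = 3" using d by simp
      ultimately show False using nW3 by metis
    qed
    obtain u w where uw: "E u w" using assms(4) by blast
    have "WW V E (card {u,w})" using CL[of "{u,w}"] uw inV sym by auto
    then have "WW V E 2" using uw irr by (metis card_2_iff)
    then have m2a: "2 \<le> m" using Rm(2) by blast
    have m2b: "m < 3"
    proof (rule ccontr)
      assume "\<not> m < 3"
      then have "m \<ge> 3" by simp
      then show False using False Rm(1) by blast
    qed
    have m2: "m = 2" using m2a m2b by simp
    have W2: "WW (V-{v}) E 2 \<longleftrightarrow> (\<exists>x y. x \<in> V-{v} \<and> y \<in> V-{v} \<and> E x y)" for v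
    proof
      assume "WW (V-{v}) E 2"
      then obtain S c where S: "S \<subseteq> V - {v}" "b_coloring S E c 2" unfolding WW_def by blast
      obtain x y where "x \<in> S" "y \<in> S" "E x y" using bcol_edge[OF S(2)] by auto
      then show "\<exists>x y. x \<in> V-{v} \<and> y \<in> V-{v} \<and> E x y" using S(1) by blast
    next
      assume "\<exists>x y. x \<in> V-{v} \<and> y \<in> V-{v} \<and> E x y"
      then obtain x y where xy: "x \<in> V-{v}" "y \<in> V-{v}" "E x y" by blast
      then have "x \<noteq> y" using irr by auto
      then have c2: "card {x,y} = 2" by simp
      have "\<forall>a\<in>{x,y}. \<forall>b\<in>{x,y}. a \<noteq> b \<longrightarrow> E a b" using xy sym by auto
      moreover have fin2: "finite {x,y}" by simp
      ultimately obtain c where bc: "b_coloring {x,y} E c (card {x,y})" using clique_bcol[where E=E, OF fin2 irr] by blast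
      then have bc2: "b_coloring {x,y} E c 2" using c2 by simp
      have sub: "{x,y} \<subseteq> V - {v}" using xy by blast
      show "WW (V-{v}) E 2" unfolding WW_def using sub bc2 by blast
    qed
    have comb: "(\<forall>v\<in>V. \<exists>x y. x \<in> V-{v} \<and> y \<in> V-{v} \<and> E x y) \<longleftrightarrow> (\<exists>a b x y. E a b \<and> E x y \<and> {a, b} \<inter> {x, y} = {})"
    proof
      assume H: "\<forall>v\<in>V. \<exists>x y. x \<in> V-{v} \<and> y \<in> V-{v} \<and> E x y"
      show "\<exists>a b x y. E a b \<and> E x y \<and> {a, b} \<inter> {x, y} = {}"
      proof (rule ccontr)
        assume N: "\<not> ?thesis"
        have uV: "u \<in> V" "w \<in> V" using uw inV by auto
        obtain x y where xy: "x \<in> V-{u}" "y \<in> V-{u}" "E x y" using H uV by blast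
        have "\<exists>y'. E w y' \<and> y' \<noteq> u"
        proof -
          have "{u,w} \<inter> {x,y} \<noteq> {}" using N uw xy by blast
          then have "x = w \<or> y = w" using xy by auto
          then show ?thesis using xy sym by blast
        qed
        then obtain y' where y': "E w y'" "y' \<noteq> u" by blast
        obtain p q where pq: "p \<in> V-{w}" "q \<in> V-{w}" "E p q" using H uV by blast
        have "\<exists>q'. E u q' \<and> q' \<noteq> w"
        proof -
          have "{u,w} \<inter> {p,q} \<noteq> {}" using N uw pq by blast
          then have "p = u \<or> q = u" using pq by auto
          then show ?thesis using pq sym by blast
        qed
        then obtain q' where q': "E u q'" "q' \<noteq> w" by blast
        show False
        proof (cases "y' = q'")
          case True
          then show False using notri[of u w y'] uw y' q' by blast
        next
          case F: False
          have "w \<noteq> u" using uw irr by blast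
          then have "{w,y'} \<inter> {u,q'} = {}" using F y' q' by auto
          then show False using N y' q' by blast
        qed
      qed
    next
      assume "\<exists>a b x y. E a b \<and> E x y \<and> {a, b} \<inter> {x, y} = {}"
      then obtain a b x y where H: "E a b" "E x y" "{a, b} \<inter> {x, y} = {}" by blast
      show "\<forall>v\<in>V. \<exists>x y. x \<in> V-{v} \<and> y \<in> V-{v} \<and> E x y"
      proof
        fix v assume "v \<in> V"
        show "\<exists>x y. x \<in> V-{v} \<and> y \<in> V-{v} \<and> E x y"
        proof (cases "v \<in> {a,b}")
          case True
          then have "v \<notin> {x,y}" using H(3) by blast
          then show ?thesis using H(2) inV by blast
        next
          case False
          then show ?thesis using H(1) inV by blast
        qed
      qed
    qed
    show ?thesis using LHS m2 W2 comb noatom by simp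
  qed
qed

end
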